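(* Let $T=\begin{pmatrix}a&b\\c&d\end{pmatrix}$ be $J$-unitary and $z\in{\mathbb S}^1$. Then $$Q_z(T)=\begin{pmatrix}(a^* )^{-1}&0\\0&d^{-1}\end{pmatrix}^*\begin{pmatrix}-{\bf 1}&-z\,b\\-\overline z\,b^*&{\bf 1}\end{pmatrix}\begin{pmatrix}(a^* )^{-1}&0\\0&d^{-1}\end{pmatrix}=\begin{pmatrix}-(a^*a)^{-1}&-z\,a^{-1}bd^{-1}\\-(z\,a^{-1}bd^{-1})^*&(dd^* )^{-1}\end{pmatrix}.$$ Moreover $0\notin\sigma(Q_z(T))$.
   Context: ${\cal H}$ is a separable complex Hilbert space, ${\cal K}={\cal H}\oplus{\cal H}$, $J=\begin{pmatrix}{\bf 1}&0\\0&-{\bf 1}\end{pmatrix}$, ${\mathbb S}^1$ the unit circle. A bounded invertible $T$ on ${\cal K}$ is $J$-unitary if $T^*JT=J$ (blocks $a,d$ are then invertible). For $w\in{\mathbb S}^1$ the operator $wT$ is also $J$-unitary, and one sets $V(\overline w\,T)=\begin{pmatrix}\overline w(a^* )^{-1}&bd^{-1}\\-d^{-1}c&w\,d^{-1}\end{pmatrix}$ (a unitary). For $z=e^{\imath s}\in{\mathbb S}^1$ define the self-adjoint operator $$Q_z(T)=\frac1\imath\,V(e^{-\imath t}T)^*\,\partial_tV(e^{-\imath t}T)\Big|_{t=s}.$$ *)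

theory Defs
  imports "HOL-Analysis.Analysis"
begin

text \<open>A complex Hilbert space is modelled as a real Hilbert space (real inner product,
complete) carrying a complex scalar multiplication compatible with the real one, such
that multiplication by the imaginary unit is orthogonal.  The complex inner product
is then recovered as cinner below (linear in the second argument).\<close>

class complex_hilbert = real_inner + complete_space +
  fixes scaleC :: "complex \<Rightarrow> 'a \<Rightarrow> 'a"
  assumes scaleC_add_right: "scaleC c (x + y) = scaleC c x + scaleC c y"
    and scaleC_add_left: "scaleC (c + d) x = scaleC c x + scaleC d x"
    and scaleC_scaleC: "scaleC c (scaleC d x) = scaleC (c * d) x"
    and scaleC_of_real: "scaleC (complex_of_real r) x = r *\<^sub>R x"
    and inner_scaleC_ii: "inner (scaleC \<i> x) (scaleC \<i> y) = inner x y"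

instantiation prod :: (complex_hilbert, complex_hilbert) complex_hilbert
begin
definition scaleC_prod :: "complex \<Rightarrow> 'a \<times> 'b \<Rightarrow> 'a \<times> 'b" where
  "scaleC_prod c p = (scaleC c (fst p), scaleC c (snd p))"
instance
  by standard (auto simp: scaleC_prod_def scaleC_add_right scaleC_add_left
      scaleC_scaleC scaleC_of_real inner_scaleC_ii prod_eq_iff)
end

definition cinner :: "'a::complex_hilbert \<Rightarrow> 'a \<Rightarrow> complex" where
  "cinner x y = Complex (inner x y) (inner x (scaleC \<i> y))"

text \<open>Bounded operators are library bounded (real-)linear maps that are complex linear.\<close>

definition is_cop :: "('a::complex_hilbert \<Rightarrow>\<^sub>L 'a) \<Rightarrow> bool" where
  "is_cop f \<longleftrightarrow> (\<forall>c x. blinfun_apply f (scaleC c x) = scaleC c (blinfun_apply f x))"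

definition cscaleL :: "complex \<Rightarrow> ('a::complex_hilbert \<Rightarrow>\<^sub>L 'a)" where
  "cscaleL c = Blinfun (\<lambda>x. scaleC c x)"

definition adj :: "('a::complex_hilbert \<Rightarrow>\<^sub>L 'a) \<Rightarrow> ('a \<Rightarrow>\<^sub>L 'a)" where
  "adj f = (THE g. \<forall>x y. cinner (blinfun_apply f x) y = cinner x (blinfun_apply g y))"

definition invertible_op :: "('a::complex_hilbert \<Rightarrow>\<^sub>L 'a) \<Rightarrow> bool" where
  "invertible_op f \<longleftrightarrow> (\<exists>g. g o\<^sub>L f = id_blinfun \<and> f o\<^sub>L g = id_blinfun)"

definition inv_op :: "('a::complex_hilbert \<Rightarrow>\<^sub>L 'a) \<Rightarrow> ('a \<Rightarrow>\<^sub>L 'a)" where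
  "inv_op f = (THE g. g o\<^sub>L f = id_blinfun \<and> f o\<^sub>L g = id_blinfun)"

definition op_spectrum :: "('a::complex_hilbert \<Rightarrow>\<^sub>L 'a) \<Rightarrow> complex set" where
  "op_spectrum f = {l. \<not> invertible_op (f - cscaleL l)}"

definition blk :: "('a::complex_hilbert \<Rightarrow>\<^sub>L 'a) \<Rightarrow> ('a \<Rightarrow>\<^sub>L 'a) \<Rightarrow> ('a \<Rightarrow>\<^sub>L 'a)
    \<Rightarrow> ('a \<Rightarrow>\<^sub>L 'a) \<Rightarrow> (('a \<times> 'a) \<Rightarrow>\<^sub>L ('a \<times> 'a))" where
  "blk a b c d = Blinfun (\<lambda>(x, y). (blinfun_apply a x + blinfun_apply b y,
                                     blinfun_apply c x + blinfun_apply d y))"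

definition inl_L :: "'a::complex_hilbert \<Rightarrow>\<^sub>L ('a \<times> 'a)" where
  "inl_L = Blinfun (\<lambda>x. (x, 0))"

definition inr_L :: "'a::complex_hilbert \<Rightarrow>\<^sub>L ('a \<times> 'a)" where
  "inr_L = Blinfun (\<lambda>y. (0, y))"

definition blk11 :: "(('a::complex_hilbert \<times> 'a) \<Rightarrow>\<^sub>L ('a \<times> 'a)) \<Rightarrow> ('a \<Rightarrow>\<^sub>L 'a)" where
  "blk11 T = fst_blinfun o\<^sub>L T o\<^sub>L inl_L"
definition blk12 :: "(('a::complex_hilbert \<times> 'a) \<Rightarrow>\<^sub>L ('a \<times> 'a)) \<Rightarrow> ('a \<Rightarrow>\<^sub>L 'a)" where
  "blk12 T = fst_blinfun o\<^sub>L T o\<^sub>L inr_L"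
definition blk21 :: "(('a::complex_hilbert \<times> 'a) \<Rightarrow>\<^sub>L ('a \<times> 'a)) \<Rightarrow> ('a \<Rightarrow>\<^sub>L 'a)" where
  "blk21 T = snd_blinfun o\<^sub>L T o\<^sub>L inl_L"
definition blk22 :: "(('a::complex_hilbert \<times> 'a) \<Rightarrow>\<^sub>L ('a \<times> 'a)) \<Rightarrow> ('a \<Rightarrow>\<^sub>L 'a)" where
  "blk22 T = snd_blinfun o\<^sub>L T o\<^sub>L inr_L"

definition Jop :: "('a::complex_hilbert \<times> 'a) \<Rightarrow>\<^sub>L ('a \<times> 'a)" where
  "Jop = blk id_blinfun 0 0 (- id_blinfun)"

definition J_unitary :: "(('a::complex_hilbert \<times> 'a) \<Rightarrow>\<^sub>L ('a \<times> 'a)) \<Rightarrow> bool" where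
  "J_unitary T \<longleftrightarrow> is_cop T \<and> invertible_op T \<and> adj T o\<^sub>L Jop o\<^sub>L T = Jop"

definition Vop :: "(('a::complex_hilbert \<times> 'a) \<Rightarrow>\<^sub>L ('a \<times> 'a)) \<Rightarrow> (('a \<times> 'a) \<Rightarrow>\<^sub>L ('a \<times> 'a))" where
  "Vop T = blk (inv_op (adj (blk11 T))) (blk12 T o\<^sub>L inv_op (blk22 T))
               (- (inv_op (blk22 T) o\<^sub>L blk21 T)) (inv_op (blk22 T))"

text \<open>Q_z(T) = (1/i) V(e^{-it}T)^* d/dt V(e^{-it}T) at t = s, where z = e^{is}
  (we take s = Arg z; the expression is 2pi-periodic in s).\<close>
definition Qop :: "complex \<Rightarrow> (('a::complex_hilbert \<times> 'a) \<Rightarrow>\<^sub>L ('a \<times> 'a)) \<Rightarrow> (('a \<times> 'a) \<Rightarrow>\<^sub>L ('a \<times> 'a))" where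
  "Qop z T = (let s = Arg z in
     cscaleL (1 / \<i>) o\<^sub>L
       (adj (Vop (cscaleL (cis (- s)) o\<^sub>L T)) o\<^sub>L
        vector_derivative (\<lambda>t. Vop (cscaleL (cis (- t)) o\<^sub>L T)) (at s)))"

end

theory Submission
  imports Defs
begin


lemma scaleC_one[simp]: "scaleC 1 (x::'a::complex_hilbert) = x"
  using scaleC_of_real[of 1 x] by simp

lemma scaleC_real_left: "scaleC (complex_of_real r) (x::'a::complex_hilbert) = r *\<^sub>R x"
  by (rule scaleC_of_real)

lemma scaleC_scaleR: "scaleC c (r *\<^sub>R (x::'a::complex_hilbert)) = r *\<^sub>R scaleC c x"
  by (metis scaleC_of_real scaleC_scaleC mult.commute)

lemma scaleC_ii: "scaleC \<i> (scaleC \<i> (x::'a::complex_hilbert)) = - x"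
proof -
  have "scaleC \<i> (scaleC \<i> x) = scaleC (complex_of_real (-1)) x" by (simp add: scaleC_scaleC)
  also have "\<dots> = - x" using scaleC_of_real[of "-1" x] by simp
  finally show ?thesis .
qed

lemma scaleC_decomp: "scaleC c (x::'a::complex_hilbert) = Re c *\<^sub>R x + Im c *\<^sub>R scaleC \<i> x"
proof -
  have c: "c = complex_of_real (Re c) + complex_of_real (Im c) * \<i>" by (simp add: complex_eq_iff)
  have "scaleC c x = scaleC (complex_of_real (Re c)) x + scaleC (complex_of_real (Im c)) (scaleC \<i> x)"
    by (subst c) (simp add: scaleC_add_left scaleC_scaleC)
  thus ?thesis by (simp add: scaleC_of_real)
qed

lemma norm_scaleC_ii[simp]: "norm (scaleC \<i> (x::'a::complex_hilbert)) = norm x"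
  by (simp add: norm_eq_sqrt_inner inner_scaleC_ii)

lemma inner_scaleC_ii_left: "inner (scaleC \<i> (x::'a::complex_hilbert)) y = - inner x (scaleC \<i> y)"
proof -
  have "inner (scaleC \<i> x) y = inner (scaleC \<i> (scaleC \<i> x)) (scaleC \<i> y)" by (simp add: inner_scaleC_ii)
  thus ?thesis by (simp add: scaleC_ii)
qed

lemma bounded_linear_scaleC: "bounded_linear (scaleC c :: 'a::complex_hilbert \<Rightarrow> 'a)"
proof -
  have h: "bounded_linear (\<lambda>x::'a. scaleC \<i> x)"
  proof (rule bounded_linear_intro[where K=1])
    fix x y :: 'a and r show "scaleC \<i> (x + y) = scaleC \<i> x + scaleC \<i> y" by (rule scaleC_add_right)
    show "scaleC \<i> (r *\<^sub>R x) = r *\<^sub>R scaleC \<i> x" by (rule scaleC_scaleR)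
    show "norm (scaleC \<i> x) \<le> norm x * 1" by simp
  qed
  then have "bounded_linear (\<lambda>x::'a. Im c *\<^sub>R scaleC \<i> x)"
    using bounded_linear_compose[OF bounded_linear_scaleR_right h] by simp
  then have "bounded_linear (\<lambda>x::'a. Re c *\<^sub>R x + Im c *\<^sub>R scaleC \<i> x)"
    by (rule bounded_linear_add[OF bounded_linear_scaleR_right])
  moreover have "scaleC c = (\<lambda>x::'a. Re c *\<^sub>R x + Im c *\<^sub>R scaleC \<i> x)"
    by (rule ext, rule scaleC_decomp)
  ultimately show ?thesis by (simp only:)
qed

lemma cscaleL_apply[simp]: "blinfun_apply (cscaleL c) x = scaleC c x"
  unfolding cscaleL_def by (simp add: bounded_linear_Blinfun_apply bounded_linear_scaleC)

lemma scaleC_zero_right[simp]: "scaleC c (0::'a::complex_hilbert) = 0"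
  using scaleC_add_right[of c "0::'a" 0] by simp

lemma scaleC_minus_right: "scaleC c (- (x::'a::complex_hilbert)) = - scaleC c x"
  by (metis scaleC_add_right scaleC_zero_right add.right_inverse minus_unique)

lemma scaleC_diff_right: "scaleC c ((x::'a::complex_hilbert) - y) = scaleC c x - scaleC c y"
  by (metis scaleC_add_right diff_add_cancel eq_diff_eq)

lemma scaleC_zero_left[simp]: "scaleC 0 (x::'a::complex_hilbert) = 0"
  using scaleC_of_real[of 0 x] by simp

lemma scaleC_minus_left: "scaleC (- c) (x::'a::complex_hilbert) = - scaleC c x"
proof -
  have "scaleC (- c) x + scaleC c x = 0" using scaleC_add_left[of "- c" c x] by simp
  thus ?thesis by (simp add: eq_neg_iff_add_eq_0)
qed

lemma scaleC_minus_one: "scaleC (- 1) (x::'a::complex_hilbert) = - x"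
  by (simp add: scaleC_minus_left)

lemma is_cop_iff: "is_cop f \<longleftrightarrow> (\<forall>x. blinfun_apply f (scaleC \<i> x) = scaleC \<i> (blinfun_apply f x))"
proof
  assume "is_cop f" thus "\<forall>x. blinfun_apply f (scaleC \<i> x) = scaleC \<i> (blinfun_apply f x)"
    by (simp add: is_cop_def)
next
  assume h: "\<forall>x. blinfun_apply f (scaleC \<i> x) = scaleC \<i> (blinfun_apply f x)"
  show "is_cop f" unfolding is_cop_def
  proof (intro allI)
    fix c x
    show "blinfun_apply f (scaleC c x) = scaleC c (blinfun_apply f x)"
      by (simp add: scaleC_decomp[of c] blinfun.add_right blinfun.scaleR_right h)
  qed
qed

lemma cop_scaleC: "is_cop f \<Longrightarrow> blinfun_apply f (scaleC c x) = scaleC c (blinfun_apply f x)"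
  by (simp add: is_cop_def)



lemma parallelogram_sq:
  fixes u v :: "'a::real_inner"
  shows "norm (u - v)^2 = 2 * norm u ^2 + 2 * norm v ^2 - norm (u + v)^2"
  by (simp add: power2_norm_eq_inner inner_add inner_diff inner_commute algebra_simps)

lemma closest_point_hilbert:
  fixes S :: "'a::{real_inner,complete_space} set"
  assumes cl: "closed S" and cv: "convex S" and ne: "S \<noteq> {}"
  shows "\<exists>p\<in>S. \<forall>q\<in>S. norm p \<le> norm q"
proof -
  define d where "d = Inf (norm ` S)"
  have bdd: "bdd_below (norm ` S)" by (rule bdd_belowI[of _ 0]) auto
  have dle: "\<And>q. q \<in> S \<Longrightarrow> d \<le> norm q" unfolding d_def by (rule cInf_lower) (use bdd in auto)
  have d0: "0 \<le> d" unfolding d_def by (rule cInf_greatest) (use ne in auto)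
  have "\<forall>n::nat. \<exists>x\<in>S. norm x < d + inverse (real (Suc n))"
  proof
    fix n :: nat
    have "Inf (norm ` S) < d + inverse (real (Suc n))" by (simp add: d_def)
    then obtain t where "t \<in> norm ` S" "t < d + inverse (real (Suc n))"
      using cInf_lessD[of "norm ` S"] ne by blast
    thus "\<exists>x\<in>S. norm x < d + inverse (real (Suc n))" by auto
  qed
  then obtain x where xS: "\<And>n. x n \<in> S" and xn: "\<And>n. norm (x n) < d + inverse (real (Suc n))"
    by metis
  have mid: "2 * d \<le> norm (x n + x m)" for n m
  proof -
    have "(1/2) *\<^sub>R x n + (1/2) *\<^sub>R x m \<in> S"
      using convexD[OF cv xS[of n] xS[of m], of "1/2" "1/2"] by simp
    then have "d \<le> norm ((1/2) *\<^sub>R (x n + x m))" using dle by (simp add: scaleR_add_right)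
    thus ?thesis by simp
  qed
  have "Cauchy x"
  proof (rule metric_CauchyI)
    fix e :: real assume e: "0 < e"
    obtain N :: nat where N: "(8 * d + 4) / e^2 < real N" using reals_Archimedean2 by blast
    have dN: "(8 * d + 4) * inverse (real (Suc N)) < e^2"
    proof -
      have "(8 * d + 4) < e^2 * real (Suc N)" using N e
        by (simp add: field_simps) (smt (verit) mult_left_mono zero_le_power2 of_nat_0_le_iff)
      thus ?thesis by (simp add: field_simps)
    qed
    show "\<exists>M. \<forall>m\<ge>M. \<forall>n\<ge>M. dist (x m) (x n) < e"
    proof (intro exI allI impI)
      fix m n assume m: "N \<le> m" and n: "N \<le> n"
      define \<delta> where "\<delta> = inverse (real (Suc N))"
      have \<delta>0: "0 < \<delta>" by (auto simp: \<delta>_def)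
      have \<delta>1: "\<delta> \<le> 1" unfolding \<delta>_def by (simp add: inverse_le_1_iff)
      have im: "inverse (real (Suc m)) \<le> \<delta>" "inverse (real (Suc n)) \<le> \<delta>"
        using m n by (auto simp: \<delta>_def intro!: le_imp_inverse_le)
      have a: "norm (x m) < d + \<delta>" "norm (x n) < d + \<delta>" using xn[of m] xn[of n] im by linarith+
      have a2: "norm (x m)^2 \<le> (d + \<delta>)^2" "norm (x n)^2 \<le> (d + \<delta>)^2"
        using a by (auto intro!: power_mono)
      have c2: "(2*d)^2 \<le> norm (x m + x n)^2" using power_mono[OF mid[of m n], of 2] d0 by simp
      have "norm (x m - x n)^2 \<le> 4 * (d + \<delta>)^2 - 4 * d^2"
        using parallelogram_sq[of "x m" "x n"] a2 c2 by (simp add: power_mult_distrib)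
      also have "\<dots> = (8 * d + 4 * \<delta>) * \<delta>" by (simp add: power2_eq_square algebra_simps)
      also have "\<dots> \<le> (8 * d + 4) * \<delta>" using \<delta>0 \<delta>1 by (intro mult_right_mono) auto
      also have "\<dots> < e^2" using dN by (simp add: \<delta>_def)
      finally have "norm (x m - x n)^2 < e^2" .
      then have "norm (x m - x n) < e" using e by (smt (verit) power_mono norm_ge_zero)
      thus "dist (x m) (x n) < e" by (simp add: dist_norm)
    qed
  qed
  then obtain p where p: "x \<longlonglongrightarrow> p" using Cauchy_convergent_iff convergent_def by blast
  have pS: "p \<in> S" using closed_sequentially[OF cl] xS p by blast
  have l1: "(\<lambda>n. norm (x n)) \<longlonglongrightarrow> norm p" by (intro tendsto_norm p)
  have l2: "(\<lambda>n. norm (x n)) \<longlonglongrightarrow> d"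
  proof (rule tendsto_sandwich[of "\<lambda>n. d" _ _ "\<lambda>n. d + inverse (real (Suc n))"])
    show "\<forall>\<^sub>F n in sequentially. d \<le> norm (x n)" using dle xS by auto
    show "\<forall>\<^sub>F n in sequentially. norm (x n) \<le> d + inverse (real (Suc n))"
      using xn by (intro always_eventually allI less_imp_le)
    show "(\<lambda>n. d) \<longlonglongrightarrow> d" by simp
    show "(\<lambda>n. d + inverse (real (Suc n))) \<longlonglongrightarrow> d"
      using tendsto_add[OF tendsto_const[of d] LIMSEQ_inverse_real_of_nat] by simp
  qed
  have "norm p = d" using LIMSEQ_unique[OF l1 l2] .
  thus ?thesis using pS dle by auto
qed

lemma orth_of_min:
  fixes p v :: "'a::real_inner"
  assumes h: "\<And>t::real. norm p \<le> norm (p + t *\<^sub>R v)"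
  shows "inner p v = 0"
proof (cases "v = 0")
  case True thus ?thesis by simp
next
  case False
  then have vv: "0 < inner v v" by simp
  define t where "t = - inner p v / inner v v"
  have "norm p ^2 \<le> norm (p + t *\<^sub>R v)^2" using h[of t] by (auto intro: power_mono)
  also have "norm (p + t *\<^sub>R v)^2 = inner p p + 2 * t * inner p v + t^2 * inner v v"
    unfolding power2_norm_eq_inner by (simp add: inner_add_left inner_add_right inner_commute algebra_simps power2_eq_square)
  finally have "0 \<le> 2 * t * inner p v + t^2 * inner v v" by (simp add: power2_norm_eq_inner)
  also have "2 * t * inner p v + t^2 * inner v v = - ((inner p v)^2 / inner v v)"
    using vv by (simp add: t_def field_simps power2_eq_square)
  finally have "(inner p v)^2 / inner v v \<le> 0" by simp
  then have "(inner p v)^2 \<le> 0" using vv by (simp add: divide_le_0_iff)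
  thus ?thesis by simp
qed

lemma inner_ext:
  fixes u w :: "'a::real_inner"
  assumes "\<And>x. inner u x = inner w x" shows "u = w"
proof -
  have "inner (u - w) (u - w) = 0" using assms by (simp add: inner_diff)
  thus ?thesis by simp
qed

lemma riesz:
  fixes f :: "'a::{real_inner,complete_space} \<Rightarrow> real"
  assumes bl: "bounded_linear f"
  shows "\<exists>y. \<forall>x. f x = inner y x"
proof (cases "\<forall>x. f x = 0")
  case True thus ?thesis by (intro exI[of _ 0]) simp
next
  case False
  then obtain x0 where x0: "f x0 \<noteq> 0" by blast
  interpret bounded_linear f by (rule bl)
  define S where "S = {x. f x = 1}"
  have ne: "S \<noteq> {}" using x0 by (auto simp: S_def scale intro!: exI[of _ "inverse (f x0) *\<^sub>R x0"])
  have cl: "closed S" unfolding S_def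
    by (intro closed_Collect_eq continuous_on_const linear_continuous_on bl)
  have cv: "convex S" unfolding S_def convex_def by (auto simp: add scale algebra_simps)
  obtain p where pS: "p \<in> S" and pmin: "\<And>q. q \<in> S \<Longrightarrow> norm p \<le> norm q"
    using closest_point_hilbert[OF cl cv ne] by blast
  have fp: "f p = 1" using pS by (simp add: S_def)
  have orth: "inner p v = 0" if "f v = 0" for v
    by (rule orth_of_min) (use that fp in \<open>auto intro!: pmin simp: S_def add scale\<close>)
  have pp: "0 < inner p p" using fp by (cases "p = 0") (auto simp: zero)
  show ?thesis
  proof (intro exI allI)
    fix x
    have "inner p (x - f x *\<^sub>R p) = 0" by (rule orth) (simp add: diff scale fp)
    then have "inner p x = f x * inner p p" by (simp add: inner_diff_right)
    thus "f x = inner ((1 / inner p p) *\<^sub>R p) x" using pp by simp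
  qed
qed

lemma real_adjoint_exists:
  fixes f :: "'a::{real_inner,complete_space} \<Rightarrow>\<^sub>L 'a"
  shows "\<exists>g::'a \<Rightarrow>\<^sub>L 'a. \<forall>x y. inner (f x) y = inner x (g y)"
proof -
  have "\<forall>y. \<exists>w. \<forall>x. inner (f x) y = inner w x"
  proof
    fix y
    have "bounded_linear (\<lambda>x. inner (f x) y)"
      using bounded_linear_compose[OF bounded_linear_inner_left[of y] blinfun.bounded_linear_right[of f]] by simp
    thus "\<exists>w. \<forall>x. inner (f x) y = inner w x" by (rule riesz)
  qed
  then obtain G where G: "\<And>x y. inner (f x) y = inner (G y) x" by metis
  have G_add: "G (y1 + y2) = G y1 + G y2" for y1 y2
    by (rule inner_ext) (simp add: G[symmetric] inner_add inner_add_right)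
  have G_scale: "G (r *\<^sub>R y) = r *\<^sub>R G y" for r y
    by (rule inner_ext) (simp add: G[symmetric])
  have G_bd: "norm (G y) \<le> norm y * norm f" for y
  proof (cases "G y = 0")
    case True thus ?thesis by simp
  next
    case False
    have "norm (G y)^2 = inner (f (G y)) y" by (simp add: G power2_norm_eq_inner)
    also have "\<dots> \<le> norm (f (G y)) * norm y" by (rule norm_cauchy_schwarz)
    also have "\<dots> \<le> norm f * norm (G y) * norm y" by (intro mult_right_mono norm_blinfun) auto
    finally have "norm (G y) * norm (G y) \<le> (norm f * norm y) * norm (G y)"
      by (simp add: power2_eq_square algebra_simps)
    then have "norm (G y) \<le> norm f * norm y" using False by simp
    thus ?thesis by (simp add: mult.commute)
  qed
  have bl: "bounded_linear G"
    by (rule bounded_linear_intro[of _ "norm f"]) (auto simp: G_add G_scale G_bd)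
  show ?thesis
    by (intro exI[of _ "Blinfun G"]) (simp add: bounded_linear_Blinfun_apply[OF bl], metis G inner_commute)
qed



lemma adj_unique:
  fixes f g :: "'a::complex_hilbert \<Rightarrow>\<^sub>L 'a"
  assumes cop: "is_cop f" and h: "\<And>x y. inner (f x) y = inner x (g y)"
  shows "adj f = g"
  unfolding adj_def
proof (rule the_equality)
  show "\<forall>x y. cinner (f x) y = cinner x (g y)"
  proof (intro allI)
    fix x y
    have "inner (f x) (scaleC \<i> y) = - inner (scaleC \<i> (f x)) y"
      by (simp add: inner_scaleC_ii_left)
    also have "\<dots> = - inner (scaleC \<i> x) (g y)" by (simp add: cop_scaleC[OF cop, symmetric] h)
    also have "\<dots> = inner x (scaleC \<i> (g y))" by (simp add: inner_scaleC_ii_left)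
    finally show "cinner (f x) y = cinner x (g y)" by (simp add: cinner_def h)
  qed
next
  fix g' :: "'a \<Rightarrow>\<^sub>L 'a" assume h': "\<forall>x y. cinner (f x) y = cinner x (g' y)"
  have e: "inner x (g' y) = inner x (g y)" for x y
    using h'[rule_format, of x y] h[of x y] by (simp add: cinner_def)
  show "g' = g"
  proof (rule blinfun_eqI, rule inner_ext)
    fix y x show "inner (g' y) x = inner (g y) x" using e[of x y] by (simp only: inner_commute)
  qed
qed

lemma adj_prop:
  fixes f :: "'a::complex_hilbert \<Rightarrow>\<^sub>L 'a"
  assumes cop: "is_cop f"
  shows "inner (f x) y = inner x (adj f y)"
proof -
  obtain g :: "'a \<Rightarrow>\<^sub>L 'a" where g: "\<And>x y. inner (f x) y = inner x (g y)"
    using real_adjoint_exists[of f] by blast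
  have "adj f = g" by (rule adj_unique[OF cop g])
  thus ?thesis by (simp add: g)
qed

lemma adj_prop2:
  fixes f :: "'a::complex_hilbert \<Rightarrow>\<^sub>L 'a"
  assumes cop: "is_cop f"
  shows "inner x (f y) = inner (adj f x) y"
  using adj_prop[OF cop, of y x] by (simp add: inner_commute)

lemma adj_cop:
  fixes f :: "'a::complex_hilbert \<Rightarrow>\<^sub>L 'a"
  assumes cop: "is_cop f" shows "is_cop (adj f)"
  unfolding is_cop_iff
proof
  fix y
  show "adj f (scaleC \<i> y) = scaleC \<i> (adj f y)"
  proof (rule inner_ext, subst (1 2) inner_commute)
    fix x
    have "inner x (adj f (scaleC \<i> y)) = inner (f x) (scaleC \<i> y)" by (simp add: adj_prop[OF cop])
    also have "\<dots> = - inner (scaleC \<i> (f x)) y" by (simp add: inner_scaleC_ii_left)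
    also have "\<dots> = - inner (scaleC \<i> x) (adj f y)" by (simp add: cop_scaleC[OF cop, symmetric] adj_prop[OF cop])
    also have "\<dots> = inner x (scaleC \<i> (adj f y))" by (simp add: inner_scaleC_ii_left)
    finally show "inner x (adj f (scaleC \<i> y)) = inner x (scaleC \<i> (adj f y))" .
  qed
qed

subsection \<open>Complex-linear operators form an algebra\<close>

lemma cop_id[simp]: "is_cop id_blinfun" by (simp add: is_cop_def)
lemma cop_zero[simp]: "is_cop 0" by (simp add: is_cop_def)
lemma cop_compose[simp]: "is_cop f \<Longrightarrow> is_cop g \<Longrightarrow> is_cop (f o\<^sub>L g)"
  by (simp add: is_cop_def)
lemma cop_add[simp]: "is_cop f \<Longrightarrow> is_cop g \<Longrightarrow> is_cop (f + g)"
  by (simp add: is_cop_def blinfun.add_left scaleC_add_right)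
lemma cop_minus[simp]: "is_cop f \<Longrightarrow> is_cop (- f)"
  by (simp add: is_cop_def blinfun.minus_left scaleC_minus_right)
lemma cop_diff[simp]: "is_cop f \<Longrightarrow> is_cop g \<Longrightarrow> is_cop (f - g)"
  by (simp add: is_cop_def blinfun.diff_left scaleC_diff_right)
lemma cop_scaleR[simp]: "is_cop f \<Longrightarrow> is_cop (r *\<^sub>R f)"
  by (simp add: is_cop_def scaleC_scaleR blinfun.scaleR_left)
lemma cop_cscaleL[simp]: "is_cop (cscaleL c)"
  by (simp add: is_cop_def scaleC_scaleC mult.commute)

lemma cscaleL_commute: "is_cop f \<Longrightarrow> cscaleL c o\<^sub>L f = f o\<^sub>L cscaleL c"
  by (rule blinfun_eqI) (simp add: cop_scaleC)
lemma cscaleL_mult: "cscaleL c o\<^sub>L cscaleL d = cscaleL (c * d)"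
  by (rule blinfun_eqI) (simp add: scaleC_scaleC)
lemma cscaleL_mult': "cscaleL c o\<^sub>L (cscaleL d o\<^sub>L f) = cscaleL (c * d) o\<^sub>L f"
  by (rule blinfun_eqI) (simp add: scaleC_scaleC)
lemma cscaleL_one[simp]: "cscaleL 1 = id_blinfun"
  by (rule blinfun_eqI) simp
lemma cscaleL_add: "cscaleL (c + d) = cscaleL c + cscaleL d"
  by (rule blinfun_eqI) (simp add: scaleC_add_left blinfun.add_left)
lemma cscaleL_of_real: "cscaleL (complex_of_real r) = r *\<^sub>R id_blinfun"
  by (rule blinfun_eqI) (simp add: scaleC_of_real blinfun.scaleR_left)

lemma adj_cscaleL: "adj (cscaleL c :: 'a::complex_hilbert \<Rightarrow>\<^sub>L 'a) = cscaleL (cnj c)"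
proof (rule adj_unique)
  fix x y :: 'a
  show "inner (cscaleL c x) y = inner x (cscaleL (cnj c) y)"
    by (simp add: scaleC_decomp[of c] scaleC_decomp[of "cnj c"] inner_add_left inner_add_right
        inner_diff_right inner_scaleC_ii_left)
qed simp

lemma adj_adj: "is_cop f \<Longrightarrow> adj (adj f) = f"
  by (rule adj_unique) (auto simp: adj_cop adj_prop2)

lemma adj_compose: "is_cop f \<Longrightarrow> is_cop g \<Longrightarrow> adj (f o\<^sub>L g) = adj g o\<^sub>L adj f"
  by (rule adj_unique) (auto simp: adj_prop)

lemma adj_add: "is_cop f \<Longrightarrow> is_cop g \<Longrightarrow> adj (f + g) = adj f + adj g"
  by (rule adj_unique) (auto simp: adj_prop blinfun.add_left inner_add_left inner_add_right)

lemma adj_minus: "is_cop f \<Longrightarrow> adj (- f) = - adj f"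
  by (rule adj_unique) (auto simp: adj_prop blinfun.minus_left)

lemma adj_diff: "is_cop f \<Longrightarrow> is_cop g \<Longrightarrow> adj (f - g) = adj f - adj g"
  by (rule adj_unique) (auto simp: adj_prop blinfun.diff_left inner_diff_left inner_diff_right)

lemma adj_zero[simp]: "adj (0 :: 'a::complex_hilbert \<Rightarrow>\<^sub>L 'a) = 0"
  by (rule adj_unique) auto

lemma adj_id[simp]: "adj (id_blinfun :: 'a::complex_hilbert \<Rightarrow>\<^sub>L 'a) = id_blinfun"
  by (rule adj_unique) auto

subsection \<open>Inverses\<close>

lemma inv_op_unique:
  assumes "g o\<^sub>L f = id_blinfun" "f o\<^sub>L g = id_blinfun"
  shows "inv_op f = g"
  unfolding inv_op_def
proof (rule the_equality)
  show "g o\<^sub>L f = id_blinfun \<and> f o\<^sub>L g = id_blinfun" using assms by simp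
next
  fix h assume h: "h o\<^sub>L f = id_blinfun \<and> f o\<^sub>L h = id_blinfun"
  have "h = h o\<^sub>L (f o\<^sub>L g)" using assms by (simp add: blinfun_eqI)
  also have "\<dots> = (h o\<^sub>L f) o\<^sub>L g" by (rule blinfun_eqI) simp
  also have "\<dots> = g" using h by (simp add: blinfun_eqI)
  finally show "h = g" .
qed

lemma inv_op_props:
  assumes "invertible_op f"
  shows "inv_op f o\<^sub>L f = id_blinfun" "f o\<^sub>L inv_op f = id_blinfun"
proof -
  obtain g where "g o\<^sub>L f = id_blinfun" "f o\<^sub>L g = id_blinfun" using assms invertible_op_def by blast
  moreover then have "inv_op f = g" by (rule inv_op_unique)
  ultimately show "inv_op f o\<^sub>L f = id_blinfun" "f o\<^sub>L inv_op f = id_blinfun" by simp_all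
qed

lemma inv_op_apply:
  assumes "invertible_op f"
  shows "inv_op f (f x) = x" "f (inv_op f x) = x"
  using inv_op_props[OF assms] by (metis blinfun_apply_blinfun_compose blinfun_apply_id_blinfun)+

lemma invertibleI: "g o\<^sub>L f = id_blinfun \<Longrightarrow> f o\<^sub>L g = id_blinfun \<Longrightarrow> invertible_op f"
  unfolding invertible_op_def by blast

lemma invertible_inv: "invertible_op f \<Longrightarrow> invertible_op (inv_op f)"
  using inv_op_props invertibleI by blast

lemma inv_inv: "invertible_op f \<Longrightarrow> inv_op (inv_op f) = f"
  using inv_op_props inv_op_unique by blast

lemma cop_inv: assumes "invertible_op f" "is_cop f" shows "is_cop (inv_op f)"
  unfolding is_cop_def
proof (intro allI)
  fix c x
  have "inv_op f (scaleC c x) = inv_op f (scaleC c (f (inv_op f x)))" by (simp add: inv_op_apply[OF assms(1)])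
  also have "\<dots> = scaleC c (inv_op f x)" by (subst cop_scaleC[OF assms(2), symmetric]) (simp only: inv_op_apply[OF assms(1)])
  finally show "inv_op f (scaleC c x) = scaleC c (inv_op f x)" .
qed

lemma invertible_compose:
  assumes "invertible_op f" "invertible_op g"
  shows "invertible_op (f o\<^sub>L g)" "inv_op (f o\<^sub>L g) = inv_op g o\<^sub>L inv_op f"
proof -
  have "(inv_op g o\<^sub>L inv_op f) o\<^sub>L (f o\<^sub>L g) = id_blinfun" "(f o\<^sub>L g) o\<^sub>L (inv_op g o\<^sub>L inv_op f) = id_blinfun"
    by (auto intro!: blinfun_eqI simp: inv_op_apply assms)
  thus "invertible_op (f o\<^sub>L g)" "inv_op (f o\<^sub>L g) = inv_op g o\<^sub>L inv_op f"
    by (auto intro: invertibleI inv_op_unique)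
qed

lemma invertible_adj:
  assumes "invertible_op f" "is_cop f"
  shows "invertible_op (adj f)" "inv_op (adj f) = adj (inv_op f)"
proof -
  have c: "is_cop (inv_op f)" by (rule cop_inv[OF assms])
  have "adj (inv_op f) o\<^sub>L adj f = id_blinfun"
    using adj_compose[OF assms(2) c] inv_op_props(2)[OF assms(1)] by simp
  moreover have "adj f o\<^sub>L adj (inv_op f) = id_blinfun"
    using adj_compose[OF c assms(2)] inv_op_props(1)[OF assms(1)] by simp
  ultimately show "invertible_op (adj f)" "inv_op (adj f) = adj (inv_op f)"
    by (auto intro: invertibleI inv_op_unique)
qed

lemma cscaleL_inv:
  assumes "c \<noteq> 0"
  shows "invertible_op (cscaleL c)" "inv_op (cscaleL c) = cscaleL (inverse c)"
proof -
  have "cscaleL (inverse c) o\<^sub>L cscaleL c = id_blinfun" "cscaleL c o\<^sub>L cscaleL (inverse c) = id_blinfun"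
    using assms by (simp_all add: cscaleL_mult)
  thus "invertible_op (cscaleL c)" "inv_op (cscaleL c) = cscaleL (inverse c)"
    by (auto intro: invertibleI inv_op_unique)
qed



lemma bl_blk:
  fixes a b c d :: "'a::complex_hilbert \<Rightarrow>\<^sub>L 'a"
  shows "bounded_linear (\<lambda>(x, y). (a x + b y, c x + d y))"
proof -
  have e: "(\<lambda>(x, y). (a x + b y, c x + d y)) = (\<lambda>p. (a (fst p) + b (snd p), c (fst p) + d (snd p)))"
    by (auto simp: fun_eq_iff)
  show ?thesis unfolding e
    by (intro bounded_linear_Pair bounded_linear_add
        bounded_linear_compose[OF blinfun.bounded_linear_right bounded_linear_fst]
        bounded_linear_compose[OF blinfun.bounded_linear_right bounded_linear_snd])
qed

lemma blk_apply[simp]: "blinfun_apply (blk a b c d) (x, y) = (a x + b y, c x + d y)"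
  unfolding blk_def by (simp add: bounded_linear_Blinfun_apply[OF bl_blk])

lemma blk_apply': "blinfun_apply (blk a b c d) p = (a (fst p) + b (snd p), c (fst p) + d (snd p))"
  by (cases p) simp

lemma inl_apply[simp]: "blinfun_apply (inl_L :: 'a::complex_hilbert \<Rightarrow>\<^sub>L _) x = (x, 0)"
proof -
  have "bounded_linear (\<lambda>x::'a. (x, 0::'a))" by (intro bounded_linear_Pair bounded_linear_ident bounded_linear_zero)
  thus ?thesis unfolding inl_L_def by (simp add: bounded_linear_Blinfun_apply)
qed

lemma inr_apply[simp]: "blinfun_apply (inr_L :: 'a::complex_hilbert \<Rightarrow>\<^sub>L _) y = (0, y)"
proof -
  have "bounded_linear (\<lambda>y::'a. (0::'a, y))" by (intro bounded_linear_Pair bounded_linear_ident bounded_linear_zero)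
  thus ?thesis unfolding inr_L_def by (simp add: bounded_linear_Blinfun_apply)
qed

lemma blk_components[simp]:
  "blk11 (blk a b c d) = a" "blk12 (blk a b c d) = b" "blk21 (blk a b c d) = c" "blk22 (blk a b c d) = d"
  by (auto intro!: blinfun_eqI simp: blk11_def blk12_def blk21_def blk22_def)

lemma blk_eta: "blk (blk11 T) (blk12 T) (blk21 T) (blk22 T) = T"
proof (rule blinfun_eqI)
  fix p :: "'a::complex_hilbert \<times> 'a"
  obtain x y where p: "p = (x, y)" by (cases p)
  have "T (x, y) = T (x, 0) + T (0, y)"
    by (metis add.right_neutral add_0 blinfun.add_right prod.inject add_Pair)
  thus "blk (blk11 T) (blk12 T) (blk21 T) (blk22 T) p = T p"
    by (simp add: p blk11_def blk12_def blk21_def blk22_def prod_eq_iff)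
qed

lemma blk_eq_iff: "blk a b c d = blk a' b' c' d' \<longleftrightarrow> a = a' \<and> b = b' \<and> c = c' \<and> d = d'"
  by (metis blk_components)

lemma blk_compose:
  "blk a b c d o\<^sub>L blk a' b' c' d' =
   blk ((a o\<^sub>L a') + (b o\<^sub>L c')) ((a o\<^sub>L b') + (b o\<^sub>L d')) ((c o\<^sub>L a') + (d o\<^sub>L c')) ((c o\<^sub>L b') + (d o\<^sub>L d'))"
  by (rule blinfun_eqI) (simp add: blk_apply' blinfun.add_left blinfun.add_right algebra_simps)

lemma blk_add: "blk a b c d + blk a' b' c' d' = blk (a + a') (b + b') (c + c') (d + d')"
  by (rule blinfun_eqI) (simp add: blk_apply' blinfun.add_left algebra_simps)

lemma blk_minus: "- blk a b c d = blk (- a) (- b) (- c) (- d)"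
  by (rule blinfun_eqI) (simp add: blk_apply' blinfun.minus_left algebra_simps)

lemma blk_scaleR: "r *\<^sub>R blk a b c d = blk (r *\<^sub>R a) (r *\<^sub>R b) (r *\<^sub>R c) (r *\<^sub>R d)"
  by (rule blinfun_eqI) (simp add: blk_apply' blinfun.scaleR_left algebra_simps scaleR_add_right)

lemma blk_id: "(id_blinfun :: ('a::complex_hilbert \<times> 'a) \<Rightarrow>\<^sub>L _) = blk id_blinfun 0 0 id_blinfun"
  by (rule blinfun_eqI) (simp add: blk_apply')

lemma blk_zero: "(0 :: ('a::complex_hilbert \<times> 'a) \<Rightarrow>\<^sub>L _) = blk 0 0 0 0"
  by (rule blinfun_eqI) (simp add: blk_apply' zero_prod_def)

lemma blk_cscaleL: "(cscaleL c :: ('a::complex_hilbert \<times> 'a) \<Rightarrow>\<^sub>L _) = blk (cscaleL c) 0 0 (cscaleL c)"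
  by (rule blinfun_eqI) (simp add: blk_apply' scaleC_prod_def)

lemma cop_blk:
  assumes "is_cop a" "is_cop b" "is_cop c" "is_cop d"
  shows "is_cop (blk a b c d)"
  using assms by (simp add: is_cop_def blk_apply' scaleC_prod_def scaleC_add_right)

lemma cop_blocks:
  assumes "is_cop T"
  shows "is_cop (blk11 T)" "is_cop (blk12 T)" "is_cop (blk21 T)" "is_cop (blk22 T)"
proof -
  have h: "T (scaleC c x, scaleC c y) = (scaleC c (fst (T (x, y))), scaleC c (snd (T (x, y))))" for c x y
    using assms unfolding is_cop_def by (metis scaleC_prod_def fst_conv snd_conv)
  have h1: "T (scaleC c x, 0) = (scaleC c (fst (T (x, 0))), scaleC c (snd (T (x, 0))))" for c x
    using h[of c x 0] by simp
  have h2: "T (0, scaleC c y) = (scaleC c (fst (T (0, y))), scaleC c (snd (T (0, y))))" for c y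
    using h[of c 0 y] by simp
  show "is_cop (blk11 T)" "is_cop (blk12 T)" "is_cop (blk21 T)" "is_cop (blk22 T)"
    by (simp_all add: is_cop_def blk11_def blk12_def blk21_def blk22_def h1 h2)
qed

lemma adj_blk:
  assumes "is_cop a" "is_cop b" "is_cop c" "is_cop d"
  shows "adj (blk a b c d) = blk (adj a) (adj c) (adj b) (adj d)"
proof (rule adj_unique[OF cop_blk[OF assms]])
  fix p q :: "'a \<times> 'a"
  show "inner (blk a b c d p) q = inner p (blk (adj a) (adj c) (adj b) (adj d) q)"
    by (cases p, cases q) (simp add: inner_add_left inner_add_right adj_prop assms)
qed



lemma bounded_below_invertible:
  fixes f :: "'a::complex_hilbert \<Rightarrow>\<^sub>L 'a"
  assumes cop: "is_cop f" and b1: "\<And>x. norm x \<le> norm (f x)" and b2: "\<And>x. norm x \<le> norm (adj f x)"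
  shows "invertible_op f"
proof -
  have inj: "f x = f y \<Longrightarrow> x = y" for x y
    using b1[of "x - y"] by (simp add: blinfun.diff_right)
  have surj: "\<exists>x. f x = y" for y
  proof -
    define S where "S = range (\<lambda>x. f x - y)"
    have ne: "S \<noteq> {}" by (simp add: S_def)
    have cv: "convex S" unfolding S_def
    proof (rule convexI)
      fix p q :: 'a and u v :: real
      assume pq: "p \<in> range (\<lambda>x. f x - y)" "q \<in> range (\<lambda>x. f x - y)" and uv: "0 \<le> u" "0 \<le> v" "u + v = 1"
      obtain a b where p: "p = f a - y" and q: "q = f b - y" using pq by blast
      have "u *\<^sub>R (f a - y) + v *\<^sub>R (f b - y) = f (u *\<^sub>R a + v *\<^sub>R b) - (u + v) *\<^sub>R y"
        by (simp add: blinfun.add_right blinfun.scaleR_right algebra_simps)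
      also have "\<dots> = f (u *\<^sub>R a + v *\<^sub>R b) - y" using uv by simp
      finally show "u *\<^sub>R p + v *\<^sub>R q \<in> range (\<lambda>x. f x - y)" unfolding p q by blast
    qed
    have cl: "closed S" unfolding closed_sequential_limits
    proof (intro allI impI, elim conjE)
      fix s l assume sS: "\<forall>n. s n \<in> S" and sl: "s \<longlonglongrightarrow> l"
      have "\<forall>n. \<exists>x. s n = f x - y" using sS by (auto simp: S_def)
      then obtain x where x0: "\<forall>n. s n = f (x n) - y" using choice[OF \<open>\<forall>n. \<exists>x. s n = f x - y\<close>] by (elim exE) 
      have x: "s n = f (x n) - y" for n using x0 by simp
      have "Cauchy s" using sl by (rule LIMSEQ_imp_Cauchy)
      have "Cauchy x"
      proof (rule metric_CauchyI)
        fix e :: real assume "0 < e"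
        then obtain M where M: "\<forall>m\<ge>M. \<forall>n\<ge>M. dist (s m) (s n) < e"
          using \<open>Cauchy s\<close> metric_CauchyD by blast
        have "dist (x m) (x n) \<le> dist (s m) (s n)" for m n
          using b1[of "x m - x n"] by (simp add: x dist_norm blinfun.diff_right)
        thus "\<exists>M. \<forall>m\<ge>M. \<forall>n\<ge>M. dist (x m) (x n) < e" using M by (meson le_less_trans)
      qed
      then obtain x0 where x0: "x \<longlonglongrightarrow> x0" using Cauchy_convergent_iff convergent_def by blast
      have "(\<lambda>n. f (x n) - y) \<longlonglongrightarrow> f x0 - y"
        by (intro tendsto_diff tendsto_const blinfun.tendsto[OF tendsto_const x0])
      moreover have "s = (\<lambda>n. f (x n) - y)" using x by (simp add: fun_eq_iff)
      ultimately have "l = f x0 - y" using sl LIMSEQ_unique by blast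
      thus "l \<in> S" by (simp add: S_def)
    qed
    obtain w where wS: "w \<in> S" and wmin: "\<And>q. q \<in> S \<Longrightarrow> norm w \<le> norm q"
      using closest_point_hilbert[OF cl cv ne] by blast
    obtain x0 where w: "w = f x0 - y" using wS S_def by blast
    have "inner w (f z) = 0" for z
    proof (rule orth_of_min)
      fix t :: real
      have "w + t *\<^sub>R f z = f (x0 + t *\<^sub>R z) - y" by (simp add: w blinfun.add_right blinfun.scaleR_right)
      then have "w + t *\<^sub>R f z \<in> S" by (simp add: S_def)
      thus "norm w \<le> norm (w + t *\<^sub>R f z)" by (rule wmin)
    qed
    then have "inner (adj f w) z = 0" for z by (simp add: adj_prop2[OF cop])
    then have "adj f w = 0" by (metis inner_eq_zero_iff)
    then have "w = 0" using b2[of w] by simp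
    thus ?thesis using w by auto
  qed
  define G where "G y = (THE x. f x = y)" for y
  have G: "f (G y) = y" for y unfolding G_def
    by (rule theI') (use surj inj in blast)
  have Gf: "G (f x) = x" for x using G inj by blast
  have bl: "bounded_linear G"
  proof (rule bounded_linear_intro[of _ 1])
    fix y1 y2 :: 'a and r :: real
    show "G (y1 + y2) = G y1 + G y2" by (rule inj) (simp add: G blinfun.add_right)
    show "G (r *\<^sub>R y1) = r *\<^sub>R G y1" by (rule inj) (simp add: G blinfun.scaleR_right)
    show "norm (G y1) \<le> norm y1 * 1" using b1[of "G y1"] by (simp add: G)
  qed
  have "Blinfun G o\<^sub>L f = id_blinfun" "f o\<^sub>L Blinfun G = id_blinfun"
    by (auto intro!: blinfun_eqI simp: bounded_linear_Blinfun_apply[OF bl] G Gf)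
  thus ?thesis by (rule invertibleI)
qed

lemma norm_ge_from_eq:
  fixes f p :: "'a::complex_hilbert \<Rightarrow>\<^sub>L 'a"
  assumes cf: "is_cop f" and cp: "is_cop p" and e: "adj f o\<^sub>L f = id_blinfun + (adj p o\<^sub>L p)"
  shows "norm x \<le> norm (f x)"
proof -
  have "inner (f x) (f x) = inner x (adj f (f x))" by (simp add: adj_prop[OF cf])
  also have "adj f (f x) = x + adj p (p x)" using e by (metis blinfun.add_left blinfun_apply_blinfun_compose blinfun_apply_id_blinfun)
  finally have "inner (f x) (f x) = inner x x + inner (p x) (p x)" by (simp add: inner_add_right adj_prop[OF cp])
  then have "norm x ^2 \<le> norm (f x) ^2" by (simp add: power2_norm_eq_inner)
  then show ?thesis by (rule power2_le_imp_le) simp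
qed

lemma invertible_from_eqs:
  fixes f p q :: "'a::complex_hilbert \<Rightarrow>\<^sub>L 'a"
  assumes cf: "is_cop f" and cp: "is_cop p" and cq: "is_cop q"
    and e1: "adj f o\<^sub>L f = id_blinfun + (adj p o\<^sub>L p)"
    and e2: "f o\<^sub>L adj f = id_blinfun + (q o\<^sub>L adj q)"
  shows "invertible_op f"
proof (rule bounded_below_invertible[OF cf])
  show "norm x \<le> norm (f x)" for x by (rule norm_ge_from_eq[OF cf cp e1])
  have "adj (adj f) o\<^sub>L adj f = id_blinfun + (adj (adj q) o\<^sub>L adj q)"
    using e2 by (simp add: adj_adj cf cq)
  then show "norm x \<le> norm (adj f x)" for x
    by (rule norm_ge_from_eq[OF adj_cop[OF cf] adj_cop[OF cq]])
qed



lemma comp_id_left[simp]: "id_blinfun o\<^sub>L f = f" by (rule blinfun_eqI) simp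
lemma comp_id_right[simp]: "f o\<^sub>L id_blinfun = f" by (rule blinfun_eqI) simp
lemma comp_zero_left[simp]: "0 o\<^sub>L f = 0" by (rule blinfun_eqI) simp
lemma comp_zero_right[simp]: "f o\<^sub>L 0 = 0" by (rule blinfun_eqI) simp
lemma comp_add_left: "(f + g) o\<^sub>L h = (f o\<^sub>L h) + (g o\<^sub>L h)" by (rule blinfun_eqI) (simp add: blinfun.add_left)
lemma comp_add_right: "h o\<^sub>L (f + g) = (h o\<^sub>L f) + (h o\<^sub>L g)" by (rule blinfun_eqI) (simp add: blinfun.add_left blinfun.add_right)
lemma comp_diff_left: "(f - g) o\<^sub>L h = (f o\<^sub>L h) - (g o\<^sub>L h)" by (rule blinfun_eqI) (simp add: blinfun.diff_left)
lemma comp_minus_left[simp]: "(- f) o\<^sub>L h = - (f o\<^sub>L h)" by (rule blinfun_eqI) (simp add: blinfun.minus_left)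
lemma comp_minus_right[simp]: "h o\<^sub>L (- f) = - (h o\<^sub>L f)" by (rule blinfun_eqI) (simp add: blinfun.minus_left blinfun.minus_right)
lemma comp_scaleR_left: "(r *\<^sub>R f) o\<^sub>L h = r *\<^sub>R (f o\<^sub>L h)" by (rule blinfun_eqI) (simp add: blinfun.scaleR_left)
lemma comp_scaleR_right: "h o\<^sub>L (r *\<^sub>R f) = r *\<^sub>R (h o\<^sub>L f)" by (rule blinfun_eqI) (simp add: blinfun.scaleR_left blinfun.scaleR_right)
lemma comp_assoc: "(f o\<^sub>L g) o\<^sub>L h = f o\<^sub>L (g o\<^sub>L h)" by (rule blinfun_eqI) simp

lemma Jop_blk: "Jop = blk id_blinfun 0 0 (- id_blinfun)" by (simp add: Jop_def)
lemma Jop_sq: "(Jop :: ('a::complex_hilbert \<times> 'a) \<Rightarrow>\<^sub>L _) o\<^sub>L Jop = id_blinfun"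
  by (simp add: Jop_def blk_compose blk_id)

lemma cscaleL_cis: "cscaleL (cis u) = cos u *\<^sub>R id_blinfun + sin u *\<^sub>R cscaleL \<i>"
  by (rule blinfun_eqI) (simp add: blinfun.add_left blinfun.scaleR_left scaleC_decomp[of "cis u"])

lemma cscaleL_scale_comb: "cscaleL (complex_of_real r * c) = r *\<^sub>R cscaleL c"
  by (rule blinfun_eqI) (simp add: blinfun.scaleR_left scaleC_scaleC[symmetric] scaleC_of_real)



lemmas cmp = comp_add_left comp_add_right comp_assoc comp_scaleR_left comp_scaleR_right

lemma Junitary_facts:
  fixes T :: "('h::complex_hilbert \<times> 'h) \<Rightarrow>\<^sub>L ('h \<times> 'h)"
  assumes JU: "J_unitary T"
  defines "a \<equiv> blk11 T" and "b \<equiv> blk12 T" and "c \<equiv> blk21 T" and "d \<equiv> blk22 T"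
  shows "is_cop a" "is_cop b" "is_cop c" "is_cop d"
    "adj a o\<^sub>L a = id_blinfun + (adj c o\<^sub>L c)"
    "adj d o\<^sub>L d = id_blinfun + (adj b o\<^sub>L b)"
    "a o\<^sub>L adj a = id_blinfun + (b o\<^sub>L adj b)"
    "d o\<^sub>L adj d = id_blinfun + (c o\<^sub>L adj c)"
    "a o\<^sub>L adj c = b o\<^sub>L adj d"
    "T = blk a b c d"
proof -
  have cT: "is_cop T" and iT: "invertible_op T" and hJ: "adj T o\<^sub>L Jop o\<^sub>L T = Jop"
    using JU by (auto simp: J_unitary_def)
  show ca: "is_cop a" "is_cop b" "is_cop c" "is_cop d" using cop_blocks[OF cT] by (auto simp: a_def b_def c_def d_def)
  show Tb: "T = blk a b c d" by (simp add: a_def b_def c_def d_def blk_eta)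
  have adjT: "adj T = blk (adj a) (adj c) (adj b) (adj d)" by (subst Tb, rule adj_blk[OF ca])
  from hJ have "blk (adj a) (adj c) (adj b) (adj d) o\<^sub>L blk id_blinfun 0 0 (- id_blinfun) o\<^sub>L blk a b c d
      = blk id_blinfun 0 0 (- id_blinfun)" by (simp add: adjT Tb[symmetric] Jop_blk)
  then have E: "blk ((adj a o\<^sub>L a) - (adj c o\<^sub>L c)) ((adj a o\<^sub>L b) - (adj c o\<^sub>L d)) ((adj b o\<^sub>L a) - (adj d o\<^sub>L c)) ((adj b o\<^sub>L b) - (adj d o\<^sub>L d))
      = blk id_blinfun 0 0 (- id_blinfun)" by (simp add: blk_compose)
  show "adj a o\<^sub>L a = id_blinfun + (adj c o\<^sub>L c)" using E by (simp add: blk_eq_iff algebra_simps)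
  show "adj d o\<^sub>L d = id_blinfun + (adj b o\<^sub>L b)" using E by (simp add: blk_eq_iff algebra_simps)
  define L where "L = Jop o\<^sub>L adj T o\<^sub>L Jop"
  have LT: "L o\<^sub>L T = id_blinfun" using hJ by (simp add: L_def comp_assoc Jop_sq)
  have Lg: "L = inv_op T"
  proof -
    have "L = L o\<^sub>L (T o\<^sub>L inv_op T)" by (simp add: inv_op_props[OF iT])
    also have "\<dots> = inv_op T" by (simp add: comp_assoc[symmetric] LT)
    finally show ?thesis .
  qed
  have "T o\<^sub>L Jop o\<^sub>L adj T = (T o\<^sub>L L) o\<^sub>L Jop" by (simp add: L_def comp_assoc Jop_sq)
  also have "\<dots> = Jop" by (simp add: Lg inv_op_props[OF iT])
  finally have hJ2: "T o\<^sub>L Jop o\<^sub>L adj T = Jop" .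
  from hJ2 have "blk a b c d o\<^sub>L blk id_blinfun 0 0 (- id_blinfun) o\<^sub>L blk (adj a) (adj c) (adj b) (adj d)
      = blk id_blinfun 0 0 (- id_blinfun)" by (simp add: adjT Tb[symmetric] Jop_blk)
  then have E2: "blk ((a o\<^sub>L adj a) - (b o\<^sub>L adj b)) ((a o\<^sub>L adj c) - (b o\<^sub>L adj d)) ((c o\<^sub>L adj a) - (d o\<^sub>L adj b)) ((c o\<^sub>L adj c) - (d o\<^sub>L adj d))
      = blk id_blinfun 0 0 (- id_blinfun)" by (simp add: blk_compose)
  show "a o\<^sub>L adj a = id_blinfun + (b o\<^sub>L adj b)" using E2 by (simp add: blk_eq_iff algebra_simps)
  show "d o\<^sub>L adj d = id_blinfun + (c o\<^sub>L adj c)" using E2 by (simp add: blk_eq_iff algebra_simps)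
  show "a o\<^sub>L adj c = b o\<^sub>L adj d" using E2 by (simp add: blk_eq_iff algebra_simps)
qed



lemma unit_cnj: "cmod w = 1 \<Longrightarrow> w * cnj w = 1"
  using complex_norm_square[of w] by simp

lemma unit_cnj': "cmod w = 1 \<Longrightarrow> cnj w * w = 1"
  using unit_cnj[of w] by (simp only: mult.commute)

lemma unit_inv: "cmod w = 1 \<Longrightarrow> inverse w = cnj w" "cmod w = 1 \<Longrightarrow> inverse (cnj w) = w"
  by (erule inverse_unique[OF unit_cnj], erule inverse_unique[OF unit_cnj'])

lemma Vop_scaled:
  fixes T :: "('h::complex_hilbert \<times> 'h) \<Rightarrow>\<^sub>L ('h \<times> 'h)"
  assumes JU: "J_unitary T" and w: "cmod w = 1"
  defines "a \<equiv> blk11 T" and "b \<equiv> blk12 T" and "c \<equiv> blk21 T" and "d \<equiv> blk22 T"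
  shows "Vop (cscaleL w o\<^sub>L T) = blk (cscaleL w o\<^sub>L inv_op (adj a)) (b o\<^sub>L inv_op d) (- (inv_op d o\<^sub>L c)) (cscaleL (cnj w) o\<^sub>L inv_op d)"
proof -
  note F = Junitary_facts[OF JU, folded a_def b_def c_def d_def]
  have ca: "is_cop a" "is_cop b" "is_cop c" "is_cop d" using F by auto
  have ia: "invertible_op a" by (rule invertible_from_eqs[OF ca(1) ca(3) ca(2) F(5) F(7)])
  have id: "invertible_op d" by (rule invertible_from_eqs[OF ca(4) ca(2) ca(3) F(6) F(8)])
  have cD: "is_cop (inv_op d)" by (rule cop_inv[OF id ca(4)])
  have w0: "w \<noteq> 0" "cnj w \<noteq> 0" using w by auto
  have wT: "cscaleL w o\<^sub>L T = blk (cscaleL w o\<^sub>L a) (cscaleL w o\<^sub>L b) (cscaleL w o\<^sub>L c) (cscaleL w o\<^sub>L d)"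
    by (subst F(10), subst blk_cscaleL) (simp add: blk_compose)
  have 1: "inv_op (adj (cscaleL w o\<^sub>L a)) = cscaleL w o\<^sub>L inv_op (adj a)"
  proof -
    have "adj (cscaleL w o\<^sub>L a) = adj a o\<^sub>L cscaleL (cnj w)" by (simp add: adj_compose ca adj_cscaleL)
    moreover have "inv_op (adj a o\<^sub>L cscaleL (cnj w)) = cscaleL w o\<^sub>L inv_op (adj a)"
      using invertible_compose(2)[OF invertible_adj(1)[OF ia ca(1)] cscaleL_inv(1)[OF w0(2)]]
      by (simp add: cscaleL_inv(2)[OF w0(2)] unit_inv[OF w])
    ultimately show ?thesis by simp
  qed
  have 2: "inv_op (cscaleL w o\<^sub>L d) = cscaleL (cnj w) o\<^sub>L inv_op d"
    using invertible_compose(2)[OF cscaleL_inv(1)[OF w0(1)] id]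
    by (simp add: cscaleL_inv(2)[OF w0(1)] unit_inv[OF w] cscaleL_commute[OF cD])
  show ?thesis
    unfolding Vop_def wT blk_components 1 2 blk_eq_iff
    by (auto intro!: blinfun_eqI simp: cop_scaleC ca cD scaleC_scaleC unit_cnj[OF w] unit_cnj'[OF w]
        blinfun.minus_left)
qed



lemma invertible_lr:
  assumes "g o\<^sub>L f = id_blinfun" "f o\<^sub>L h = id_blinfun" shows "invertible_op f"
proof -
  have "g = g o\<^sub>L (f o\<^sub>L h)" using assms by simp
  also have "\<dots> = h" by (simp only: comp_assoc[symmetric] assms(1) comp_id_left)
  finally have gh: "g = h" .
  show ?thesis by (rule invertibleI[of g]) (use assms gh in simp_all)
qed

lemma invertible_diag:
  fixes p q :: "'a::complex_hilbert \<Rightarrow>\<^sub>L 'a"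
  assumes "invertible_op p" "invertible_op q" shows "invertible_op (blk p 0 0 q)"
  by (rule invertibleI[of "blk (inv_op p) 0 0 (inv_op q)"])
     (simp_all add: blk_compose inv_op_props assms blk_id[symmetric])

theorem proposition3p23:
  fixes T :: "('h::complex_hilbert \<times> 'h) \<Rightarrow>\<^sub>L ('h \<times> 'h)" and z :: complex
  assumes sep: "separable_space (euclidean :: 'h topology)"
    and JU: "J_unitary T"
    and z: "cmod z = 1"
  defines "a \<equiv> blk11 T" and "b \<equiv> blk12 T" and "c \<equiv> blk21 T" and "d \<equiv> blk22 T"
  shows "(Qop z T =
           adj (blk (inv_op (adj a)) 0 0 (inv_op d)) o\<^sub>L
           blk (- id_blinfun) (- (cscaleL z o\<^sub>L b)) (- (cscaleL (cnj z) o\<^sub>L adj b)) id_blinfun o\<^sub>L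
           blk (inv_op (adj a)) 0 0 (inv_op d))
    \<and> (Qop z T =
           blk (- inv_op (adj a o\<^sub>L a))
               (- (cscaleL z o\<^sub>L inv_op a o\<^sub>L b o\<^sub>L inv_op d))
               (- adj (cscaleL z o\<^sub>L inv_op a o\<^sub>L b o\<^sub>L inv_op d))
               (inv_op (d o\<^sub>L adj d)))
    \<and> 0 \<notin> op_spectrum (Qop z T)"
proof -
  note F = Junitary_facts[OF JU, folded a_def b_def c_def d_def]
  have ca: "is_cop a" "is_cop b" "is_cop c" "is_cop d" using F by auto
  have ia: "invertible_op a" by (rule invertible_from_eqs[OF ca(1) ca(3) ca(2) F(5) F(7)])
  have id: "invertible_op d" by (rule invertible_from_eqs[OF ca(4) ca(2) ca(3) F(6) F(8)])
  define A where "A = inv_op (adj a)"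
  define D where "D = inv_op d"
  define I where "I = (cscaleL \<i> :: 'h \<Rightarrow>\<^sub>L 'h)"
  have iA: "invertible_op A" unfolding A_def by (rule invertible_inv[OF invertible_adj(1)[OF ia ca(1)]])
  have iD: "invertible_op D" unfolding D_def by (rule invertible_inv[OF id])
  have cA: "is_cop A" unfolding A_def by (rule cop_inv[OF invertible_adj(1)[OF ia ca(1)] adj_cop[OF ca(1)]])
  have cD: "is_cop D" unfolding D_def by (rule cop_inv[OF id ca(4)])
  have cia: "is_cop (inv_op a)" by (rule cop_inv[OF ia ca(1)])
  have adjA: "adj A = inv_op a"
    unfolding A_def using invertible_adj(2)[OF ia ca(1)] invertible_adj(2)[OF invertible_adj(1)[OF ia ca(1)] adj_cop[OF ca(1)]]
    by (metis adj_adj ca(1) cop_inv ia inv_inv invertible_adj(1) invertible_inv)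
  have adjD: "adj D = inv_op (adj d)" unfolding D_def using invertible_adj(2)[OF id ca(4)] by simp
  define s where "s = Arg z"
  have zs: "cis s = z"
  proof -
    have "z \<noteq> 0" using z by auto
    then have "cis s = sgn z" unfolding s_def by (rule cis_Arg)
    also have "sgn z = z" using z by (simp add: sgn_div_norm)
    finally show ?thesis .
  qed
  define E0 where "E0 = blk 0 (b o\<^sub>L D) (- (D o\<^sub>L c)) 0"
  define E1 where "E1 = blk A 0 0 D"
  define E2 where "E2 = blk (- (I o\<^sub>L A)) 0 0 (I o\<^sub>L D)"
  have V: "Vop (cscaleL (cis (- t)) o\<^sub>L T) = E0 + cos t *\<^sub>R E1 + sin t *\<^sub>R E2" for t
  proof -
    have "Vop (cscaleL (cis (- t)) o\<^sub>L T) = blk (cscaleL (cis (- t)) o\<^sub>L A) (b o\<^sub>L D) (- (D o\<^sub>L c)) (cscaleL (cis t) o\<^sub>L D)"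
      using Vop_scaled[OF JU, of "cis (- t)"] by (simp add: a_def b_def c_def d_def A_def D_def cis_cnj)
    also have "\<dots> = E0 + cos t *\<^sub>R E1 + sin t *\<^sub>R E2"
      unfolding E0_def E1_def E2_def blk_add blk_scaleR cscaleL_cis I_def
      by (simp add: comp_add_left comp_diff_left comp_scaleR_left)
    finally show ?thesis .
  qed
  have dV: "((\<lambda>t. E0 + cos t *\<^sub>R E1 + sin t *\<^sub>R E2) has_vector_derivative (- sin s *\<^sub>R E1 + cos s *\<^sub>R E2)) (at s)"
  proof -
    have d1: "((\<lambda>t. cos t *\<^sub>R E1) has_vector_derivative (- sin s) *\<^sub>R E1) (at s)"
      using has_vector_derivative_scaleR[OF DERIV_cos[of s] has_vector_derivative_const[of E1]] by simp
    have d2: "((\<lambda>t. sin t *\<^sub>R E2) has_vector_derivative cos s *\<^sub>R E2) (at s)"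
      using has_vector_derivative_scaleR[OF DERIV_sin[of s] has_vector_derivative_const[of E2]] by simp
    have "((\<lambda>t. E0 + cos t *\<^sub>R E1 + sin t *\<^sub>R E2) has_vector_derivative (0 + (- sin s) *\<^sub>R E1 + cos s *\<^sub>R E2)) (at s)"
      by (intro has_vector_derivative_add has_vector_derivative_const d1 d2)
    thus ?thesis by simp
  qed
  have Q0: "Qop z T = cscaleL (1 / \<i>) o\<^sub>L (adj (E0 + cos s *\<^sub>R E1 + sin s *\<^sub>R E2) o\<^sub>L (- sin s *\<^sub>R E1 + cos s *\<^sub>R E2))"
    unfolding Qop_def Let_def s_def[symmetric] V vector_derivative_at[OF dV] ..
  have Vs: "E0 + cos s *\<^sub>R E1 + sin s *\<^sub>R E2 = blk (cscaleL (cnj z) o\<^sub>L A) (b o\<^sub>L D) (- (D o\<^sub>L c)) (cscaleL z o\<^sub>L D)"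
  proof -
    have cz: "cis (- s) = cnj z" by (subst zs[symmetric]) (simp add: cis_cnj)
    show ?thesis
      using V[of s] Vop_scaled[OF JU, of "cis (- s)"] zs z
      by (simp add: a_def b_def c_def d_def A_def D_def cis_cnj cz)
  qed
  have dVs: "- sin s *\<^sub>R E1 + cos s *\<^sub>R E2 = blk (cscaleL (- \<i> * cnj z) o\<^sub>L A) 0 0 (cscaleL (\<i> * z) o\<^sub>L D)"
    unfolding E1_def E2_def blk_add blk_scaleR blk_eq_iff I_def zs[symmetric]
    by (auto intro!: blinfun_eqI simp: blinfun.add_left blinfun.diff_left blinfun.minus_left blinfun.scaleR_left scaleC_decomp[of "- \<i> * cnj (cis s)"] scaleC_decomp[of "- (\<i> * cnj (cis s))"]
        scaleC_decomp[of "\<i> * cis s"])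
  have key: "adj c o\<^sub>L adj D = inv_op a o\<^sub>L b"
  proof -
    have "adj c = inv_op a o\<^sub>L (a o\<^sub>L adj c)" by (simp add: comp_assoc[symmetric] inv_op_props[OF ia])
    also have "\<dots> = inv_op a o\<^sub>L b o\<^sub>L adj d" by (simp add: F(9) comp_assoc)
    finally have "adj c o\<^sub>L adj D = inv_op a o\<^sub>L b o\<^sub>L (adj d o\<^sub>L inv_op (adj d))" by (simp add: adjD comp_assoc)
    thus ?thesis by (simp add: inv_op_props[OF invertible_adj(1)[OF id ca(4)]])
  qed
  have adjVs: "adj (blk (cscaleL (cnj z) o\<^sub>L A) (b o\<^sub>L D) (- (D o\<^sub>L c)) (cscaleL z o\<^sub>L D))
      = blk (inv_op a o\<^sub>L cscaleL z) (- (inv_op a o\<^sub>L b)) (adj D o\<^sub>L adj b) (adj D o\<^sub>L cscaleL (cnj z))"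
    by (simp add: adj_blk ca cA cD adj_compose adj_minus adj_cscaleL adjA key)
  have k1: "\<i> * (z * (\<i> * cnj z)) = -1"
  proof -
    have "\<i> * (z * (\<i> * cnj z)) = (\<i> * \<i>) * (z * cnj z)" by (simp only: mult_ac)
    thus ?thesis by (simp add: unit_cnj[OF z])
  qed
  have k3: "- (\<i> * (cnj z * (\<i> * z))) = 1"
  proof -
    have "\<i> * (cnj z * (\<i> * z)) = (\<i> * \<i>) * (z * cnj z)" by (simp only: mult_ac)
    thus ?thesis by (simp add: unit_cnj[OF z])
  qed
  have Qb: "Qop z T = blk (- (inv_op a o\<^sub>L A)) (- (cscaleL z o\<^sub>L inv_op a o\<^sub>L b o\<^sub>L D))
      (- (cscaleL (cnj z) o\<^sub>L adj D o\<^sub>L adj b o\<^sub>L A)) (adj D o\<^sub>L D)"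
    unfolding Q0 Vs dVs adjVs blk_cscaleL
    apply (simp add: blk_compose blk_eq_iff)
    apply (intro conjI blinfun_eqI)
    apply (simp_all add: cop_scaleC ca cA cD cia adj_cop scaleC_scaleC blinfun.minus_left k1 k3 scaleC_minus_one)
    apply (simp_all add: scaleC_minus_left)
    done
  have f2: "Qop z T =
           blk (- inv_op (adj a o\<^sub>L a))
               (- (cscaleL z o\<^sub>L inv_op a o\<^sub>L b o\<^sub>L inv_op d))
               (- adj (cscaleL z o\<^sub>L inv_op a o\<^sub>L b o\<^sub>L inv_op d))
               (inv_op (d o\<^sub>L adj d))"
  proof -
    have i1: "inv_op (adj a o\<^sub>L a) = inv_op a o\<^sub>L A"
      unfolding A_def by (rule invertible_compose(2)[OF invertible_adj(1)[OF ia ca(1)] ia])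
    have i2: "inv_op (d o\<^sub>L adj d) = adj D o\<^sub>L D"
      using invertible_compose(2)[OF id invertible_adj(1)[OF id ca(4)]] by (simp only: adjD[symmetric] D_def[symmetric])
    have i3: "adj (inv_op a) = A" unfolding A_def using invertible_adj(2)[OF ia ca(1)] by simp
    show ?thesis
      unfolding Qb i1 i2 blk_eq_iff D_def[symmetric]
      by (auto intro!: blinfun_eqI simp: adj_compose adj_minus adj_cscaleL i3 ca cia cD cA cop_scaleC adj_cop blinfun.minus_left)
  qed
  define N where "N = blk (- id_blinfun) (- (cscaleL z o\<^sub>L b)) (- (cscaleL (cnj z) o\<^sub>L adj b)) id_blinfun"
  have adjM: "adj (blk A 0 0 D) = blk (inv_op a) 0 0 (adj D)"
    by (simp add: adj_blk cA cD adjA)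
  have f1: "Qop z T = adj (blk (inv_op (adj a)) 0 0 (inv_op d)) o\<^sub>L N o\<^sub>L blk (inv_op (adj a)) 0 0 (inv_op d)"
    unfolding A_def[symmetric] D_def[symmetric] adjM Qb N_def
    by (auto simp: blk_compose blk_eq_iff intro!: blinfun_eqI simp: ca cia cD cA adj_cop cop_scaleC blinfun.minus_left)
  have iN: "invertible_op N"
  proof -
    define M where "M = blk (a o\<^sub>L adj a) 0 0 (adj d o\<^sub>L d)"
    have NN: "N o\<^sub>L N = M"
      unfolding N_def M_def F(7) F(6)
      by (auto simp: blk_compose blk_eq_iff intro!: blinfun_eqI simp: ca adj_cop cop_scaleC scaleC_scaleC
          blinfun.minus_left blinfun.add_left unit_cnj[OF z] unit_cnj'[OF z] mult.assoc[symmetric])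
    have iM: "invertible_op M" unfolding M_def
      by (intro invertible_diag invertible_compose(1) ia id invertible_adj(1) ca)
    show ?thesis
    proof (rule invertible_lr[of "inv_op M o\<^sub>L N" _ "N o\<^sub>L inv_op M"])
      show "(inv_op M o\<^sub>L N) o\<^sub>L N = id_blinfun" by (simp add: comp_assoc NN inv_op_props[OF iM])
      show "N o\<^sub>L (N o\<^sub>L inv_op M) = id_blinfun" by (simp add: comp_assoc[symmetric] NN inv_op_props[OF iM])
    qed
  qed
  have iQ: "invertible_op (Qop z T)"
  proof -
    have iM: "invertible_op (blk A 0 0 D)" by (rule invertible_diag[OF iA iD])
    have cM: "is_cop (blk A 0 0 D)" by (simp add: cop_blk cA cD)
    show ?thesis unfolding f1 A_def[symmetric] D_def[symmetric]
      by (intro invertible_compose(1) iN iM invertible_adj(1)[OF iM cM])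
  qed
  have "cscaleL 0 = (0 :: ('h \<times> 'h) \<Rightarrow>\<^sub>L _)" by (rule blinfun_eqI) simp
  then have "0 \<notin> op_spectrum (Qop z T)" using iQ by (simp add: op_spectrum_def)
  with f1 f2 show ?thesis by (simp add: N_def)
qed

end
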